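(* Let $m$ be a positive integer, let $\delta\in\mathbb{F}_{2^{3m}}$ be fixed and let $c\in\mathbb{F}_{2^m}^*$. Then the polynomial \[ f(x)=(x^{2^m}+x+\delta)^{2^{2m}+1}+cx \] is a permutation polynomial of $\mathbb{F}_{2^{3m}}$.
   Context: A polynomial $f\in\mathbb{F}_Q[x]$ is a permutation polynomial of $\mathbb{F}_Q$ if the map $c\mapsto f(c)$ is a bijection of $\mathbb{F}_Q$. $\mathbb{F}_{2^m}$ is viewed as the subfield of $\mathbb{F}_{2^{3m}}$. *)

theory Defs
  imports "HOL-Computational_Algebra.Polynomial"
begin

definition permutation_polynomial :: "'a::{field,finite} poly \<Rightarrow> bool" where
  "permutation_polynomial f \<longleftrightarrow> bij (poly f)"

definition subfield_of_order :: "nat \<Rightarrow> 'a::field set" where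
  "subfield_of_order q = {x. x ^ q = x}"

end

theory Submission
  imports Defs
begin

lemma card_zero:
  shows "of_nat (card (UNIV :: 'a::{comm_ring_1,finite} set)) = (0::'a)"
proof -
  have b: "bij_betw (\<lambda>y::'a. y + 1) UNIV UNIV"
    by (rule bij_betw_byWitness[where f'="\<lambda>y. y - 1"]) auto
  have "(\<Sum>y\<in>UNIV. (y::'a)) = (\<Sum>y\<in>UNIV. y + 1)"
    using sum.reindex_bij_betw[OF b, of "\<lambda>y. y"] by simp
  also have "\<dots> = (\<Sum>y\<in>UNIV. y) + of_nat (card (UNIV::'a set))"
    by (simp add: sum.distrib)
  finally show ?thesis by simp
qed

lemma fermat:
  fixes x :: "'a::{field,finite}"
  shows "x ^ card (UNIV :: 'a set) = x"
proof (cases "x = 0")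
  case True
  have "card (UNIV :: 'a set) > 0" by (simp add: card_gt_0_iff)
  then show ?thesis using True by (simp add: power_0_left)
next
  case False
  let ?S = "UNIV - {0::'a}"
  have b: "bij_betw (\<lambda>y. x * y) ?S ?S"
    by (rule bij_betw_byWitness[where f'="\<lambda>y. y / x"]) (use False in auto)
  have "(\<Prod>y\<in>?S. y) = (\<Prod>y\<in>?S. x * y)"
    using prod.reindex_bij_betw[OF b, of "\<lambda>y. y"] by simp
  also have "\<dots> = x ^ card ?S * (\<Prod>y\<in>?S. y)"
    by (simp add: prod.distrib)
  finally have "x ^ card ?S = 1"
    by (metis (no_types, lifting) DiffE Diff_insert_absorb finite insertI1 mult.commute mult_cancel_right1 prod_zero_iff)
  moreover have "card ?S + 1 = card (UNIV :: 'a set)"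
    by (metis card_Diff_singleton finite UNIV_I Suc_eq_plus1 card_gt_0_iff Suc_pred' UNIV_not_empty finite_UNIV)
  ultimately show ?thesis by (metis power_Suc2 Suc_eq_plus1 mult_1)
qed

lemma frob:
  fixes x y :: "'a::comm_ring_1"
  assumes "(2::'a) = 0"
  shows "(x + y) ^ (2 ^ k) = x ^ (2 ^ k) + y ^ (2 ^ k)"
proof (induction k)
  case 0 then show ?case by simp
next
  case (Suc k)
  have "(x + y) ^ (2 ^ Suc k) = ((x + y) ^ (2 ^ k)) ^ 2"
    by (simp add: power_mult[symmetric] mult.commute)
  also have "\<dots> = (x ^ (2 ^ k) + y ^ (2 ^ k)) ^ 2" using Suc by simp
  also have "\<dots> = (x ^ (2 ^ k))^2 + (y ^ (2 ^ k)) ^ 2 + 2 * (x ^ (2 ^ k)) * (y ^ (2 ^ k))"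
    by (rule power2_sum)
  also have "\<dots> = (x ^ (2 ^ k))^2 + (y ^ (2 ^ k)) ^ 2" using assms by simp
  moreover have "\<And>z::'a. z ^ (2 ^ Suc k) = (z ^ (2 ^ k)) ^ 2"
    by (simp add: power_mult[symmetric] mult.commute)
  ultimately show ?case by metis
qed

lemma frobm:
  fixes x y :: "'a::comm_ring_1"
  assumes "(2::'a) = 0"
  shows "(x - y) ^ (2 ^ k) = x ^ (2 ^ k) - y ^ (2 ^ k)"
proof -
  have n: "\<And>z::'a. - z = z" using assms by (metis add_eq_0_iff mult_2 mult_zero_left)
  have "(x - y) ^ (2 ^ k) = (x + y) ^ (2 ^ k)" using n by (metis diff_conv_add_uminus)
  also have "\<dots> = x ^ (2 ^ k) + y ^ (2 ^ k)" using frob[OF assms] .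
  also have "\<dots> = x ^ (2 ^ k) - y ^ (2 ^ k)" using n by (metis diff_conv_add_uminus)
  finally show ?thesis .
qed

lemma aux3:
  fixes w B D u p r :: "'a::comm_ring_1"
  assumes "B = r + p" "D = u + r" "w = p + u"
  shows "w + B + D = 2 * (u + p + r)"
  unfolding assms mult_2 by (simp add: ac_simps)

theorem proposition1:
  fixes m :: nat and \<delta> c :: "'a::{field,finite}"
  assumes "m > 0"
    and "card (UNIV :: 'a set) = 2 ^ (3 * m)"
    and "c \<in> subfield_of_order (2 ^ m)" and "c \<noteq> 0"
  shows "permutation_polynomial
           (([:\<delta>, 1:] + monom 1 (2 ^ m)) ^ (2 ^ (2 * m) + 1) + [:0, c:])"
proof -
  have "(2::'a) ^ (3*m) = 0" using card_zero[where 'a='a] assms(2) by simp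
  hence two: "(2::'a) = 0" by simp
  have dbl: "\<And>y::'a. y + y = 0" using two by (metis mult_2 mult_zero_left) 
  let ?q = "2 ^ m :: nat"
  have F: "\<And>y::'a. y ^ (2^(3*m)) = y" using fermat assms(2) by metis
  have add: "\<And>x y::'a. \<And>k. (x + y) ^ (2 ^ k) = x ^ (2 ^ k) + y ^ (2 ^ k)"
    using frob two by blast
  have pq: "\<And>y::'a. (y ^ (2^m)) ^ (2^m) = y ^ (2^(2*m))"
    by (simp add: power_mult[symmetric] power_add[symmetric] mult_2)
  have pq2: "\<And>y::'a. (y ^ (2^(2*m))) ^ (2^m) = y"
  proof -
    fix y :: 'a
    have "(y ^ (2^(2*m))) ^ (2^m) = y ^ (2^(3*m))"
      by (simp add: power_mult[symmetric] power_add[symmetric] numeral_3_eq_3 algebra_simps)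
    then show "(y ^ (2^(2*m))) ^ (2^m) = y" using F by simp
  qed
  have cq: "c ^ (2^m) = c" using assms(3) by (simp add: subfield_of_order_def)
  define f where "f = (\<lambda>x::'a. (x ^ (2^m) + x + \<delta>) ^ (2 ^ (2 * m) + 1) + c * x)"
  have pf: "poly (([:\<delta>, 1:] + monom 1 (2 ^ m)) ^ (2 ^ (2 * m) + 1) + [:0, c:]) = f"
    by (rule ext) (simp add: f_def poly_monom algebra_simps)
  have "inj f"
  proof (rule injI)
    fix x x' :: 'a
    assume h: "f x = f x'"
    define a where "a = x ^ (2^m) + x + \<delta>"
    define a' where "a' = x' ^ (2^m) + x' + \<delta>"
    define b where "b = a ^ (2^m)"
    define b' where "b' = a' ^ (2^m)"
    define d where "d = a ^ (2^(2*m))"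
    define d' where "d' = a' ^ (2^(2*m))"
    have h0: "d * a + c * x = d' * a' + c * x'"
      using h by (simp add: f_def a_def a'_def d_def d'_def algebra_simps)
    have "(d * a + c * x) ^ (2^m) = (d' * a' + c * x') ^ (2^m)" using h0 by simp
    hence h1: "a * b + c * x ^ (2^m) = a' * b' + c * x' ^ (2^m)"
      by (simp add: add power_mult_distrib cq d_def d'_def b_def b'_def pq2)
    have fm: "\<And>x y::'a. \<And>k. (x - y) ^ (2 ^ k) = x ^ (2 ^ k) - y ^ (2 ^ k)"
      using frobm two by blast
    have xq: "x ^ (2^m) = a - x - \<delta>" "x' ^ (2^m) = a' - x' - \<delta>"
      unfolding a_def a'_def by simp_all
    have G: "a * b + d * a + c * a = a' * b' + d' * a' + c * a'"
      using h0 h1[unfolded xq] by algebra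
    define u where "u = x - x'"
    define w where "w = a - a'"
    have w1: "w = u ^ (2^m) + u"
      unfolding w_def u_def fm a_def a'_def by simp
    have wb: "w ^ (2^m) = b - b'" unfolding w_def b_def b'_def fm ..
    have wd: "w ^ (2^(2*m)) = d - d'" unfolding w_def d_def d'_def fm ..
    have uu: "(u ^ (2^m)) ^ (2^(2*m)) = u"
      by (metis pq2 power_mult mult.commute)
    have T: "w + (b - b') + (d - d') = 0"
    proof -
      have "b - b' = u ^ (2^(2*m)) + u ^ (2^m)" using wb w1 add pq by metis
      moreover have "d - d' = u + u ^ (2^(2*m))" using wd w1 add uu by metis
      ultimately have "w + (b - b') + (d - d') = 2 * (u + u ^ (2^m) + u ^ (2^(2*m)))"
        using w1 aux3 by metis
      thus ?thesis using two by simp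
    qed
    have key: "w * (b + d + c + w - a) = 0"
      using G T unfolding w_def by algebra
    have "w = 0"
    proof (rule ccontr)
      assume "w \<noteq> 0"
      hence "b + d + c + w - a = 0" using key by simp
      hence e: "w = a - b - d - c" by algebra
      have "w ^ (2^m) = b - d - a - c"
        unfolding e fm b_def d_def pq pq2 cq ..
      also have "\<dots> = a - b - d - c + 2 * (b - a)" by algebra
      finally have wq: "w ^ (2^m) = w" using e two by simp
      have wq2: "w ^ (2^(2*m)) = w" using pq wq by metis
      have "w + w ^ (2^m) + w ^ (2^(2*m)) = 0" using T wb wd by simp
      hence "w + w + w = 0" using wq wq2 by simp
      moreover have "w + w = 0" using two by (metis mult_2 mult_zero_left)
      ultimately have "w = 0" by (metis add.left_neutral)
      thus False using \<open>w \<noteq> 0\<close> by simp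
    qed
    hence "a = a'" unfolding w_def by simp
    hence "c * x = c * x'" using h0 unfolding d_def d'_def by simp
    thus "x = x'" using assms(4) by simp
  qed
  then have "surj f" by (rule finite_UNIV_inj_surj[OF finite_UNIV])
  with \<open>inj f\<close> show ?thesis unfolding permutation_polynomial_def pf bij_def by simp
qed

end
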